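(* In the setting of the context, $$\|\mathcal D\|_\perp\le\big(\lambda_2^{(2)}\lambda_2^{(1)}\big)^2.$$
   Context: Let $x_0\in\mathbb C^n\setminus\{0\}$ and $A=[A_1,A_2]$ with $A_1,A_2\in\mathbb C^{n\times N/2}$ such that each $A_l^*$ is isometric ($A_lA_l^*=I_n$). For $l=1,2$: $b_l=|A_l^*x_0|$, $B_l=A_l\,\mathrm{diag}\big(\frac{A_l^*x_0}{|A_l^*x_0|}\big)$ (componentwise quotient, convention $y(j)/|y(j)|=1$ if $y(j)=0$), $\mathcal B_l=\begin{bmatrix}\Re B_l\\ \Im B_l\end{bmatrix}\in\mathbb R^{2n\times N/2}$, and $\lambda_2^{(l)}=\max\{\|\Im(B_l^*u)\|:u\in\mathbb C^n,\ \Re((iu)^*x_0)=0,\ \|u\|=1\}$. Let $G(v)=\begin{bmatrix}\Re v\\ \Im v\end{bmatrix}\in\mathbb R^{2n}$, $\xi_1=G(x_0)$, $\mathcal D=\mathcal B_2\mathcal B_2^\top\mathcal B_1\mathcal B_1^\top\in\mathbb R^{2n\times 2n}$, and $\|\mathcal D\|_\perp=\max\{\|\mathcal D\xi\|:\xi\in\mathbb R^{2n},\ \xi^\top\xi_1=0,\ \|\xi\|=1\}$. *)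

theory Defs
  imports "HOL-Analysis.Analysis"
begin

text \<open>The real space R^{2n} is real^('n::finite + 'n::finite): Inl i is the real-part block, Inr i the imaginary-part block.\<close>

definition cadj :: "complex^'m::finite^'n::finite \<Rightarrow> complex^'n::finite^'m::finite" where
  "cadj A = (\<chi> j i. cnj (A $ i $ j))"

definition phase :: "complex^'m::finite \<Rightarrow> complex^'m::finite" where
  "phase y = (\<chi> j. if y $ j = 0 then 1 else y $ j / complex_of_real (cmod (y $ j)))"

definition Bmat :: "complex^'m::finite^'n::finite \<Rightarrow> complex^'n::finite \<Rightarrow> complex^'m::finite^'n::finite" where
  "Bmat A x0 = (\<chi> i j. A $ i $ j * phase (cadj A *v x0) $ j)"

definition realify :: "complex^'m::finite^'n::finite \<Rightarrow> real^'m::finite^('n::finite + 'n::finite)" where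
  "realify B = (\<chi> k j. case k of Inl i \<Rightarrow> Re (B $ i $ j) | Inr i \<Rightarrow> Im (B $ i $ j))"

definition Gvec :: "complex^'n::finite \<Rightarrow> real^('n::finite + 'n::finite)" where
  "Gvec v = (\<chi> k. case k of Inl i \<Rightarrow> Re (v $ i) | Inr i \<Rightarrow> Im (v $ i))"

definition cinner :: "complex^'n::finite \<Rightarrow> complex^'n::finite \<Rightarrow> complex" where
  "cinner u v = (\<Sum>k\<in>UNIV. cnj (u $ k) * v $ k)"

definition lambda2 :: "complex^'m::finite^'n::finite \<Rightarrow> complex^'n::finite \<Rightarrow> real" where
  "lambda2 B x0 = Sup {norm ((\<chi> j. Im ((cadj B *v u) $ j)) :: real^'m::finite) | u.
       Re (cinner (\<i> *s u) x0) = 0 \<and> norm u = 1}"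

definition Dmat :: "complex^'m::finite^'n::finite \<Rightarrow> complex^'m::finite^'n::finite \<Rightarrow> complex^'n::finite \<Rightarrow> real^('n::finite+'n::finite)^('n::finite+'n::finite)" where
  "Dmat A1 A2 x0 = (let B1 = realify (Bmat A1 x0); B2 = realify (Bmat A2 x0)
     in B2 ** transpose B2 ** B1 ** transpose B1)"

definition perp_norm :: "real^('n::finite+'n::finite)^('n::finite+'n::finite) \<Rightarrow> real^('n::finite+'n::finite) \<Rightarrow> real" where
  "perp_norm D \<xi>1 = Sup {norm (D *v \<xi>) | \<xi>. \<xi> \<bullet> \<xi>1 = 0 \<and> norm \<xi> = 1}"

end

theory Submission imports Defs begin

lemma adj_real: fixes M :: "real^'a^'b"
  shows "inner (M *v x) y = inner x (transpose M *v y)"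
  unfolding inner_vec_def matrix_vector_mult_def transpose_def
  apply (simp add: sum_distrib_left sum_distrib_right)
  apply (subst sum.swap)
  apply (simp add: mult_ac)
  done

lemma key:
  fixes M :: "real^'m^'k" and e :: "real^'k"
  assumes bound: "\<And>\<xi>. \<xi> \<bullet> e = 0 \<Longrightarrow> norm \<xi> = 1 \<Longrightarrow> norm (transpose M *v \<xi>) \<le> l"
    and orth: "\<And>\<xi>. \<xi> \<bullet> e = 0 \<Longrightarrow> (transpose M *v e) \<bullet> (transpose M *v \<xi>) = 0"
    and l0: "l \<ge> 0" and xi: "\<xi> \<bullet> e = 0"
  shows "norm (M *v (transpose M *v \<xi>)) \<le> l^2 * norm \<xi> \<and> (M *v (transpose M *v \<xi>)) \<bullet> e = 0"
proof -
  have b2: "norm (transpose M *v \<eta>) \<le> l * norm \<eta>" if "\<eta> \<bullet> e = 0" for \<eta>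
  proof (cases "\<eta> = 0")
    case True then show ?thesis by simp
  next
    case False
    hence n: "norm \<eta> > 0" by simp
    have "(inverse (norm \<eta>) *\<^sub>R \<eta>) \<bullet> e = 0" using that by simp
    moreover have "norm (inverse (norm \<eta>) *\<^sub>R \<eta>) = 1" using n by simp
    ultimately have "norm (transpose M *v (inverse (norm \<eta>) *\<^sub>R \<eta>)) \<le> l" by (rule bound)
    hence "inverse (norm \<eta>) * norm (transpose M *v \<eta>) \<le> l"
      using n by (simp add: matrix_vector_mult_scaleR)
    thus ?thesis using n by (simp add: field_simps)
  qed
  define P where "P = M *v (transpose M *v \<xi>)"
  have "P \<bullet> e = (transpose M *v \<xi>) \<bullet> (transpose M *v e)"
    unfolding P_def by (rule adj_real)
  hence o: "P \<bullet> e = 0" using orth[OF xi] by (metis inner_commute)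
  have "norm P ^ 2 = P \<bullet> P" by (simp add: power2_norm_eq_inner)
  also have "\<dots> = (M *v (transpose M *v \<xi>)) \<bullet> P"
    by (simp only: P_def[symmetric])
  also have "\<dots> = (transpose M *v \<xi>) \<bullet> (transpose M *v P)"
    by (rule adj_real)
  also have "\<dots> \<le> norm (transpose M *v \<xi>) * norm (transpose M *v P)"
    by (rule norm_cauchy_schwarz)
  also have "\<dots> \<le> (l * norm \<xi>) * (l * norm P)"
    by (rule mult_mono) (use b2[OF xi] b2[OF o] l0 in auto)
  finally have "norm P * norm P \<le> (l^2 * norm \<xi>) * norm P" by (simp add: power2_eq_square mult_ac)
  hence "norm P \<le> l^2 * norm \<xi>"
    by (cases "norm P = 0") (auto simp: l0)
  with o show ?thesis unfolding P_def by simp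
qed


lemma sum_Plus_UNIV:
  "(\<Sum>k\<in>(UNIV::('a::finite+'b::finite) set). f k) = (\<Sum>i\<in>UNIV. f (Inl i)) + (\<Sum>i\<in>UNIV. f (Inr i))"
  by (subst UNIV_Plus_UNIV[symmetric], subst sum.Plus) auto

lemma Gvec_inner: "Gvec u \<bullet> Gvec v = Re (cinner u v)"
  unfolding inner_vec_def Gvec_def cinner_def
  by (simp add: sum_Plus_UNIV Re_sum sum.distrib)

lemma re_cnj_sq: "Re (cnj z * z) = (cmod z)^2"
proof -
  have "cnj z * z = of_real ((cmod z)^2)"
    by (metis complex_norm_square mult.commute of_real_power)
  thus ?thesis by simp
qed

lemma phase_real: "cnj (phase y $ j) * y $ j = of_real (cmod (y$j))"
proof (cases "y $ j = 0")
  case True thus ?thesis by (simp add: phase_def)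
next
  case False
  hence c: "cmod (y$j) \<noteq> 0" by simp
  have "cnj (phase y $ j) * y $ j = (cnj (y$j) * y$j) / of_real (cmod (y$j))"
    using False by (simp add: phase_def)
  also have "cnj (y$j) * y$j = of_real ((cmod (y$j))^2)"
    by (metis complex_norm_square mult.commute of_real_power)
  finally show ?thesis using c by (simp add: power2_eq_square)
qed

lemma norm_sq_cinner: "(norm (u::complex^'n))^2 = Re (cinner u u)"
proof -
  have "(norm u)^2 = (\<Sum>i\<in>UNIV. (cmod (u$i))^2)"
    unfolding norm_vec_def L2_set_def by (simp add: sum_nonneg)
  also have "\<dots> = Re (cinner u u)"
    unfolding cinner_def Re_sum
    by (rule sum.cong) (simp_all only: re_cnj_sq)
  finally show ?thesis .
qed

lemma Gvec_norm: "norm (Gvec u) = norm u"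
proof -
  have "(norm (Gvec u))^2 = Gvec u \<bullet> Gvec u" by (rule power2_norm_eq_inner)
  also have "\<dots> = (norm u)^2" by (simp only: Gvec_inner norm_sq_cinner)
  finally have "(norm (Gvec u))^2 = (norm u)^2" .
  thus ?thesis by (simp add: power2_eq_iff_nonneg)
qed

lemma Gvec_surj: "\<exists>u. \<xi> = Gvec u"
proof
  show "\<xi> = Gvec (\<chi> i. Complex (\<xi> $ Inl i) (\<xi> $ Inr i))"
    unfolding Gvec_def vec_eq_iff by (auto split: sum.splits)
qed

lemma realify_T: "transpose (realify B) *v Gvec u = (\<chi> j. Re ((cadj B *v u) $ j))"
  unfolding transpose_def realify_def Gvec_def matrix_vector_mult_def cadj_def vec_eq_iff
  by (simp add: sum_Plus_UNIV Re_sum sum.distrib)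

lemma cinner_adj: "cinner u (A *v v) = cinner (cadj A *v u) v"
  unfolding cinner_def matrix_vector_mult_def cadj_def
  apply (simp add: sum_distrib_left sum_distrib_right)
  apply (subst sum.swap)
  apply (simp add: mult_ac)
  done

lemma cmod_phase: "cmod (phase y $ j) = 1"
  unfolding phase_def by (simp add: norm_divide)

lemma Biso: assumes "A ** cadj A = mat 1" shows "Bmat A x0 ** cadj (Bmat A x0) = mat 1"
proof -
  have ph: "phase y $ j * cnj (phase y $ j) = 1" for y :: "complex^'m" and j
    using cmod_phase[of y j] by (metis complex_norm_square mult.commute of_real_1 one_power2 complex_mult_cnj)
  have "Bmat A x0 ** cadj (Bmat A x0) = A ** cadj A"
    unfolding Bmat_def cadj_def matrix_matrix_mult_def vec_eq_iff
    apply (clarsimp)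
    apply (rule sum.cong, simp)
    using ph by (metis (no_types, lifting) mult.assoc mult.left_commute mult_1_right)
  with assms show ?thesis by simp
qed

lemma B_real: "Im ((cadj (Bmat A x0) *v x0) $ j) = 0"
proof -
  let ?y = "cadj A *v x0"
  have "(cadj (Bmat A x0) *v x0) $ j = cnj (phase ?y $ j) * ?y $ j"
    unfolding Bmat_def cadj_def matrix_vector_mult_def
    by (simp add: sum_distrib_right mult_ac)
  also have "\<dots> = of_real (cmod (?y $ j))"
    by (rule phase_real)
  finally show ?thesis by simp
qed

lemma mv_smult: "(M::complex^'a^'b) *v (c *s u) = c *s (M *v u)"
  unfolding matrix_vector_mult_def vec_eq_iff by (simp add: sum_distrib_left mult_ac)

lemma norm_adj: assumes "B ** cadj B = mat 1" shows "norm (cadj B *v u) = norm (u::complex^'n)"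
proof -
  have "cinner (cadj B *v u) (cadj B *v u) = cinner u (B *v (cadj B *v u))"
    by (simp add: cinner_adj)
  also have "\<dots> = cinner u u" by (simp add: matrix_vector_mul_assoc assms)
  finally have "(norm (cadj B *v u))^2 = (norm u)^2" by (simp add: norm_sq_cinner)
  thus ?thesis by (simp add: power2_eq_iff_nonneg)
qed


lemma norm_i: "norm (\<i> *s (u::complex^'n)) = norm u"
  unfolding norm_vec_def by (simp add: norm_mult)

lemma lam_bound:
  fixes A :: "complex^'m^'n" and x0 :: "complex^'n"
  assumes iso: "A ** cadj A = mat 1"
    and xi: "\<xi> \<bullet> Gvec x0 = 0" and n1: "norm \<xi> = 1"
  shows "norm (transpose (realify (Bmat A x0)) *v \<xi>) \<le> lambda2 (Bmat A x0) x0"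
proof -
  let ?B = "Bmat A x0"
  have isoB: "?B ** cadj ?B = mat 1" by (rule Biso[OF iso])
  obtain u where u: "\<xi> = Gvec u" using Gvec_surj by blast
  let ?v = "\<i> *s u"
  have T: "transpose (realify ?B) *v \<xi> = (\<chi> j. Im ((cadj ?B *v ?v) $ j))"
    unfolding u realify_T by (simp add: mv_smult vec_eq_iff)
  have "cinner (\<i> *s ?v) x0 = - cinner u x0"
    unfolding cinner_def by (simp add: sum_negf[symmetric])
  moreover have "Re (cinner u x0) = 0" using xi u by (simp add: Gvec_inner)
  ultimately have c1: "Re (cinner (\<i> *s ?v) x0) = 0" by simp
  have c2: "norm ?v = 1" using n1 u by (simp add: norm_i Gvec_norm)
  let ?S = "{norm ((\<chi> j. Im ((cadj ?B *v u) $ j)) :: real^'m) | u.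
       Re (cinner (\<i> *s u) x0) = 0 \<and> norm u = 1}"
  have mem: "norm (transpose (realify ?B) *v \<xi>) \<in> ?S"
    unfolding T using c1 c2 by blast
  have bdd: "bdd_above ?S"
  proof (rule bdd_aboveI)
    fix x assume "x \<in> ?S"
    then obtain w where x: "x = norm ((\<chi> j. Im ((cadj ?B *v w) $ j)) :: real^'m)" and w: "norm w = 1"
      by blast
    have "x \<le> norm (cadj ?B *v w)"
      unfolding x by (rule norm_le_componentwise_cart) (simp add: abs_Im_le_cmod)
    also have "\<dots> = 1" using norm_adj[OF isoB] w by simp
    finally show "x \<le> 1" .
  qed
  show ?thesis unfolding lambda2_def by (rule cSup_upper[OF mem bdd])
qed

lemma lam_orth:
  fixes A :: "complex^'m^'n" and x0 :: "complex^'n"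
  assumes iso: "A ** cadj A = mat 1"
    and xi: "\<xi> \<bullet> Gvec x0 = 0"
  shows "(transpose (realify (Bmat A x0)) *v Gvec x0) \<bullet> (transpose (realify (Bmat A x0)) *v \<xi>) = 0"
proof -
  let ?B = "Bmat A x0"
  have isoB: "?B ** cadj ?B = mat 1" by (rule Biso[OF iso])
  obtain u where u: "\<xi> = Gvec u" using Gvec_surj by blast
  let ?c = "cadj ?B *v x0" and ?d = "cadj ?B *v u"
  have "(transpose (realify ?B) *v Gvec x0) \<bullet> (transpose (realify ?B) *v \<xi>)
      = (\<Sum>j\<in>UNIV. Re (?c $ j) * Re (?d $ j))"
    unfolding u realify_T inner_vec_def by simp
  also have "\<dots> = Re (cinner ?c ?d)"
    unfolding cinner_def Re_sum by (rule sum.cong) (simp_all add: B_real)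
  also have "cinner ?c ?d = cinner x0 (?B *v ?d)" by (simp add: cinner_adj)
  also have "?B *v ?d = u" by (simp add: matrix_vector_mul_assoc isoB)
  also have "Re (cinner x0 u) = Gvec u \<bullet> Gvec x0" by (metis Gvec_inner inner_commute)
  also have "\<dots> = 0" using xi u by simp
  finally show ?thesis .
qed

lemma perp_exists:
  fixes x0 :: "complex^'n"
  assumes "x0 \<noteq> 0"
  shows "\<exists>\<xi>. \<xi> \<bullet> Gvec x0 = 0 \<and> norm \<xi> = 1"
proof -
  let ?w = "Gvec (\<i> *s x0)"
  have im: "Im (cinner x0 x0) = 0" unfolding cinner_def Im_sum by simp
  have "cinner (\<i> *s x0) x0 = - \<i> * cinner x0 x0"
    unfolding cinner_def by (simp add: sum_distrib_left mult.assoc)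
  hence o: "?w \<bullet> Gvec x0 = 0" using im by (simp add: Gvec_inner)
  have nw: "norm ?w = norm x0" by (simp add: Gvec_norm norm_i)
  hence nz: "norm ?w \<noteq> 0" using assms by simp
  show ?thesis
    by (rule exI[of _ "inverse (norm ?w) *\<^sub>R ?w"]) (use o nz in simp)
qed

theorem mainTheorem12:
  fixes x0 :: "complex^'n" and A1 A2 :: "complex^'m^'n"
  assumes "x0 \<noteq> 0"
    and "A1 ** cadj A1 = mat 1"
    and "A2 ** cadj A2 = mat 1"
  shows "perp_norm (Dmat A1 A2 x0) (Gvec x0)
           \<le> (lambda2 (Bmat A2 x0) x0 * lambda2 (Bmat A1 x0) x0)\<^sup>2"
proof -
  let ?e = "Gvec x0"
  let ?M1 = "realify (Bmat A1 x0)" and ?M2 = "realify (Bmat A2 x0)"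
  let ?l1 = "lambda2 (Bmat A1 x0) x0" and ?l2 = "lambda2 (Bmat A2 x0) x0"
  obtain \<xi>0 where \<xi>0: "\<xi>0 \<bullet> ?e = 0" "norm \<xi>0 = 1" using perp_exists[OF assms(1)] by blast
  have l1: "?l1 \<ge> 0"
    using lam_bound[OF assms(2) \<xi>0] norm_ge_zero order_trans by blast
  have l2: "?l2 \<ge> 0"
    using lam_bound[OF assms(3) \<xi>0] norm_ge_zero order_trans by blast
  have K1: "norm (?M1 *v (transpose ?M1 *v \<xi>)) \<le> ?l1^2 * norm \<xi> \<and> (?M1 *v (transpose ?M1 *v \<xi>)) \<bullet> ?e = 0"
    if "\<xi> \<bullet> ?e = 0" for \<xi>
    by (rule key[OF lam_bound[OF assms(2)] lam_orth[OF assms(2)] l1 that])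
  have K2: "norm (?M2 *v (transpose ?M2 *v \<xi>)) \<le> ?l2^2 * norm \<xi> \<and> (?M2 *v (transpose ?M2 *v \<xi>)) \<bullet> ?e = 0"
    if "\<xi> \<bullet> ?e = 0" for \<xi>
    by (rule key[OF lam_bound[OF assms(3)] lam_orth[OF assms(3)] l2 that])
  show ?thesis
    unfolding perp_norm_def
  proof (rule cSup_least)
    show "{norm (Dmat A1 A2 x0 *v \<xi>) |\<xi>. \<xi> \<bullet> ?e = 0 \<and> norm \<xi> = 1} \<noteq> {}"
      using \<xi>0 by blast
  next
    fix x assume "x \<in> {norm (Dmat A1 A2 x0 *v \<xi>) |\<xi>. \<xi> \<bullet> ?e = 0 \<and> norm \<xi> = 1}"
    then obtain \<xi> where x: "x = norm (Dmat A1 A2 x0 *v \<xi>)" and \<xi>: "\<xi> \<bullet> ?e = 0" "norm \<xi> = 1"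
      by blast
    let ?P = "?M1 *v (transpose ?M1 *v \<xi>)"
    have D: "Dmat A1 A2 x0 *v \<xi> = ?M2 *v (transpose ?M2 *v ?P)"
      unfolding Dmat_def Let_def by (simp only: matrix_vector_mul_assoc matrix_mul_assoc)
    have a: "norm ?P \<le> ?l1^2" and b: "?P \<bullet> ?e = 0" using K1[OF \<xi>(1)] \<xi>(2) by auto
    have "x \<le> ?l2^2 * norm ?P" unfolding x D using K2[OF b] by blast
    also have "\<dots> \<le> ?l2^2 * ?l1^2" by (rule mult_left_mono[OF a]) simp
    finally show "x \<le> (?l2 * ?l1)^2" by (simp add: power_mult_distrib)
  qed
qed

end
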